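(* Consider binary node classification with classes $\{0,1\}$, let $k\in\{0,1\}$, and let $c_0,c_1\in(0,1)$ be the class homophily parameters. Assume the classes are balanced ($P(\hat{Y}=0)=P(\hat{Y}=1)$), the graph is heterophilic ($c_k<1-c_{1-k}$), and $0<c_k<0.5$. If two nodes $n$ and $m$ have degrees $d_n>d_m$ and $|\mathcal{N}_k(n)| = |\mathcal{N}_k(m)|$ (so that $|\mathcal{N}_{1-k}(n)| > |\mathcal{N}_{1-k}(m)|$), then $$P\big(\hat{Y}_{n} = k \mid \{Y_j\}_{j\in\mathcal{N}(n)}\big) > P\big(\hat{Y}_{m} = k \mid \{Y_j\}_{j\in\mathcal{N}(m)}\big).$$
   Context: Model: each node $i$ has a (latent/soft) class $\hat{Y}_i\in\{0,1\}$, and each neighbor $j\in\mathcal{N}(i)$ has an observed label $Y_j\in\{0,1\}$. Given $\hat{Y}_i$, the neighbor labels are conditionally independent with $P(Y_j=k\mid \hat{Y}_i=k)=c_k$ and $P(Y_j=1-k\mid\hat{Y}_i=k)=1-c_k$ for $k\in\{0,1\}$ ($c_k$ is the class homophily of class $k$). The posterior is obtained by Bayes' rule: $P(\hat Y_i=k\mid\{Y_j=y_j\}_{j\in\mathcal N(i)})\propto P(\hat Y_i=k)\prod_{j\in\mathcal N(i)}P(Y_j=y_j\mid \hat Y_i=k)$, conditioning on the observed neighbor labels. Notation: $\mathcal{N}_k(i)=\{j\in\mathcal{N}(i): y_j=k\}$, $\mathcal{N}_{1-k}(i)=\{j\in\mathcal{N}(i): y_j=1-k\}$, and the degree of $i$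 is $d_i=|\mathcal N(i)|=|\mathcal{N}_k(i)|+|\mathcal{N}_{1-k}(i)|$. *)

theory Defs
  imports Complex_Main
begin

text \<open>Classes are the naturals 0 and 1. c k is the class homophily of class k.\<close>
definition nbr_lik :: "(nat \<Rightarrow> real) \<Rightarrow> nat \<Rightarrow> nat \<Rightarrow> real" where
  "nbr_lik c k yj = (if yj = k then c k else 1 - c k)"

text \<open>Posterior P(hatY_i = k | {Y_j = y j}_{j in N i}) by Bayes' rule, with prior p,
  conditionally independent neighbour labels, normalised over the classes 0 and 1.\<close>
definition posterior ::
  "(nat \<Rightarrow> real) \<Rightarrow> (nat \<Rightarrow> real) \<Rightarrow> ('v \<Rightarrow> 'v set) \<Rightarrow> ('v \<Rightarrow> nat) \<Rightarrow> 'v \<Rightarrow> nat \<Rightarrow> real" where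
  "posterior p c N y i k =
     p k * (\<Prod>j\<in>N i. nbr_lik c k (y j)) /
     (\<Sum>l\<in>{0,1}. p l * (\<Prod>j\<in>N i. nbr_lik c l (y j)))"

definition nbrs_with :: "('v \<Rightarrow> 'v set) \<Rightarrow> ('v \<Rightarrow> nat) \<Rightarrow> 'v \<Rightarrow> nat \<Rightarrow> 'v set" where
  "nbrs_with N y i k = {j \<in> N i. y j = k}"

end

theory Submission
  imports Defs
begin

lemma prod_split:
  assumes "finite S"
  shows "(\<Prod>j\<in>S. nbr_lik c l (y j)) =
     c l ^ card {j\<in>S. y j = l} * (1 - c l) ^ card {j\<in>S. y j \<noteq> l}"
proof -
  have "(\<Prod>j\<in>S. nbr_lik c l (y j)) = (\<Prod>j\<in>S. if y j = l then c l else 1 - c l)"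
    by (simp add: nbr_lik_def)
  also have "\<dots> = (\<Prod>j\<in>S \<inter> {j. y j = l}. c l) * (\<Prod>j\<in>S \<inter> - {j. y j = l}. 1 - c l)"
    by (rule prod.If_cases) (rule assms)
  also have "S \<inter> {j. y j = l} = {j\<in>S. y j = l}" by auto
  also have "S \<inter> - {j. y j = l} = {j\<in>S. y j \<noteq> l}" by auto
  finally show ?thesis by simp
qed

lemma sum01: "k \<in> {0,1::nat} \<Longrightarrow> (\<Sum>l\<in>{0,1}. f l) = f k + f (1 - k)"
  by (auto simp: add.commute)

lemma key:
  fixes \<alpha> \<beta> \<gamma> \<delta> :: real and a bn bm :: nat
  assumes "0 < \<alpha>" "0 < \<beta>" "0 < \<gamma>" "0 < \<delta>" "\<delta> < \<beta>" "bm < bn"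
  shows "\<alpha>^a * \<beta>^bm / (\<alpha>^a * \<beta>^bm + \<gamma>^a * \<delta>^bm)
       < \<alpha>^a * \<beta>^bn / (\<alpha>^a * \<beta>^bn + \<gamma>^a * \<delta>^bn)"
proof -
  obtain d where d: "bn = bm + d" "d > 0" using assms(6) by (metis less_imp_add_positive)
  have "\<delta>^d < \<beta>^d" using assms d by (simp add: power_strict_mono)
  have pos: "0 < \<alpha>^a" "0 < \<beta>^bm" "0 < \<gamma>^a" "0 < \<delta>^bm" "0 < \<beta>^d" "0 < \<delta>^d"
    using assms by auto
  have "\<alpha>^a * \<beta>^bm * (\<gamma>^a * \<delta>^bm * \<delta>^d) < \<alpha>^a * \<beta>^bm * (\<gamma>^a * \<delta>^bm * \<beta>^d)"
    using pos \<open>\<delta>^d < \<beta>^d\<close> by simp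
  hence "\<alpha>^a * \<beta>^bm * (\<alpha>^a * \<beta>^bn + \<gamma>^a * \<delta>^bn)
         < \<alpha>^a * \<beta>^bn * (\<alpha>^a * \<beta>^bm + \<gamma>^a * \<delta>^bm)"
    by (simp add: d power_add algebra_simps)
  thus ?thesis using pos
    by (simp add: divide_simps d power_add add_pos_pos)
qed

theorem mainTheorem4:
  fixes p c :: "nat \<Rightarrow> real" and N :: "'v \<Rightarrow> 'v set" and y :: "'v \<Rightarrow> nat"
    and k :: nat and n m :: 'v
  assumes k: "k \<in> {0, 1}"
    and c0: "0 < c 0" "c 0 < 1" and c1: "0 < c 1" "c 1 < 1"
    and prior: "p 0 = 1/2" "p 1 = 1/2"
    and hetero: "c k < 1 - c (1 - k)"
    and ck: "0 < c k" "c k < 1/2"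
    and fin: "finite (N n)" "finite (N m)"
    and labels: "\<forall>j \<in> N n \<union> N m. y j \<in> {0, 1}"
    and deg: "card (N n) > card (N m)"
    and same_k: "card (nbrs_with N y n k) = card (nbrs_with N y m k)"
  shows "posterior p c N y n k > posterior p c N y m k"
proof -
  have pk: "p k = 1/2" "p (1-k) = 1/2" using k prior by auto
  have ck1: "0 < c (1-k)" "c (1-k) < 1" using k c0 c1 by auto
  have gen: "posterior p c N y i k =
      c k ^ card (nbrs_with N y i k) * (1 - c k) ^ card {j\<in>N i. y j \<noteq> k} /
      (c k ^ card (nbrs_with N y i k) * (1 - c k) ^ card {j\<in>N i. y j \<noteq> k}
       + (1 - c (1-k)) ^ card (nbrs_with N y i k) * c (1-k) ^ card {j\<in>N i. y j \<noteq> k})"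
    if fi: "finite (N i)" and li: "\<forall>j\<in>N i. y j \<in> {0,1}" for i
  proof -
    have e1: "{j\<in>N i. y j = 1 - k} = {j\<in>N i. y j \<noteq> k}" using li k by auto
    have e2: "{j\<in>N i. y j \<noteq> 1 - k} = {j\<in>N i. y j = k}" using li k by auto
    show ?thesis
      unfolding posterior_def sum01[OF k] pk prod_split[OF fi] e1 e2 nbrs_with_def
      by (simp add: mult.commute)
  qed
  have cardsplit: "card {j\<in>N i. y j \<noteq> k} = card (N i) - card (nbrs_with N y i k)"
    if fi: "finite (N i)" for i
  proof -
    have "N i = nbrs_with N y i k \<union> {j\<in>N i. y j \<noteq> k}" "nbrs_with N y i k \<inter> {j\<in>N i. y j \<noteq> k} = {}"
      by (auto simp: nbrs_with_def)
    hence "card (N i) = card (nbrs_with N y i k) + card {j\<in>N i. y j \<noteq> k}"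
      using fi by (metis card_Un_disjoint finite_Un)
    thus ?thesis by simp
  qed
  have le: "card (nbrs_with N y m k) \<le> card (N m)"
    using fin by (intro card_mono) (auto simp: nbrs_with_def)
  have lt: "card {j\<in>N m. y j \<noteq> k} < card {j\<in>N n. y j \<noteq> k}"
    using cardsplit[OF fin(1)] cardsplit[OF fin(2)] same_k deg le by simp
  have l1: "\<forall>j\<in>N n. y j \<in> {0,1}" and l2: "\<forall>j\<in>N m. y j \<in> {0,1}" using labels by auto
  show ?thesis
    unfolding gen[OF fin(1) l1] gen[OF fin(2) l2]
    apply (simp only: same_k)
    apply (rule key)
    using ck ck1 hetero lt labels by auto
qed

end
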